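(* Let $n\ge 2$, $\rho>0$, and let $F$ be a continuous distribution supported on the non-negative real numbers with a monotone decreasing density $f$ (and positive mean). Then the best-case zero-outage capacity $\overline{R^{0}}(\rho)=\log_2(1+\rho\,\phi(0))$ satisfies $\overline{R^{0}}(\rho)>0$.
   Context: Let $G=F^{-1}$ be the quantile function of $F$. For $a\in[0,1]$ define $H_a(x)=(n-1)G(a+(n-1)x)+G(1-x)$ and $c_n(a)=\min\{c\in[0,\tfrac{1-a}{n}]: \int_c^{(1-a)/n}H_a(t)\,dt\ge(\tfrac{1-a}{n}-c)H_a(c)\}$, and $\phi(a)=H_a(c_n(a))$ if $c_n(a)>0$, $\phi(a)=n\,\mathbb{E}[X\mid X>G(a)]$ with $X\sim F$ if $c_n(a)=0$. The quantity $\log_2(1+\rho\phi(\varepsilon))$ is the largest $\varepsilon$-outage capacity $\sup\{R\ge0:\Pr(\sum_{i=1}^n|h_i|^2<(2^R-1)/\rho)<\varepsilon\}$ over all joint distributions of $(|h_1|^2,\dots,|h_n|^2)$ with each $|h_i|^2\sim F$; the zero-outage case is $\varepsilon=0$. *)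

theory Defs
  imports "HOL-Analysis.Analysis"
begin

definition dist_of :: "(real \<Rightarrow> real) \<Rightarrow> real measure" where
  "dist_of f = density lborel (\<lambda>x. ennreal (f x))"

definition cdf_of :: "(real \<Rightarrow> real) \<Rightarrow> real \<Rightarrow> real" where
  "cdf_of f x = measure (dist_of f) {..x}"

text \<open>Quantile function G = F^{-1}, G(p) = inf {x : F x \<ge> p}, taken over the
  support [0,\<infinity>) and with values in [0,\<infinity>] (G(1) = \<infinity> for unbounded support).\<close>
definition quantile :: "(real \<Rightarrow> real) \<Rightarrow> real \<Rightarrow> ennreal" where
  "quantile f p = Inf {ennreal x | x. 0 \<le> x \<and> p \<le> cdf_of f x}"

definition Hfun :: "nat \<Rightarrow> (real \<Rightarrow> real) \<Rightarrow> real \<Rightarrow> real \<Rightarrow> ennreal" where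
  "Hfun n f a x = of_nat (n - 1) * quantile f (a + real (n - 1) * x) + quantile f (1 - x)"

definition cn :: "nat \<Rightarrow> (real \<Rightarrow> real) \<Rightarrow> real \<Rightarrow> real" where
  "cn n f a = Inf {c \<in> {0..(1 - a) / real n}.
      ennreal ((1 - a) / real n - c) * Hfun n f a c
        \<le> (\<integral>\<^sup>+ t \<in> {c..(1 - a) / real n}. Hfun n f a t \<partial>lborel)}"

definition phi :: "nat \<Rightarrow> (real \<Rightarrow> real) \<Rightarrow> real \<Rightarrow> real" where
  "phi n f a =
     (if cn n f a > 0 then enn2real (Hfun n f a (cn n f a))
      else (let g = enn2real (quantile f a) in
            real n * ((\<integral>x \<in> {g<..}. x \<partial>dist_of f) / measure (dist_of f) {g<..})))"

definition best_zero_outage_capacity :: "nat \<Rightarrow> real \<Rightarrow> (real \<Rightarrow> real) \<Rightarrow> real" where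
  "best_zero_outage_capacity n \<rho> f = log 2 (1 + \<rho> * phi n f 0)"

end

theory Submission
  imports Defs "HOL-Probability.Distribution_Functions"
begin

lemma setup_dist:
  fixes f :: "real \<Rightarrow> real"
  assumes f0: "\<And>x. f x \<ge> 0"
    and fneg: "\<And>x. x < 0 \<Longrightarrow> f x = 0"
    and int: "integrable lborel f"
    and one: "(\<integral>x. f x \<partial>lborel) = 1"
  shows "real_distribution (dist_of f)" and "cdf_of f 0 = 0"
    and "cdf_of f = cdf (dist_of f)"
proof -
  have fm[measurable]: "f \<in> borel_measurable borel"
    using borel_measurable_integrable[OF int] by simp
  have sets: "sets (dist_of f) = sets borel" unfolding dist_of_def by simp
  have "emeasure (dist_of f) UNIV = (\<integral>\<^sup>+ x. ennreal (f x) * indicator UNIV x \<partial>lborel)"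
    unfolding dist_of_def by (rule emeasure_density) auto
  also have "\<dots> = (\<integral>\<^sup>+ x. ennreal (f x) \<partial>lborel)" by simp
  also have "\<dots> = ennreal (\<integral>x. f x \<partial>lborel)"
    by (rule nn_integral_eq_integral[OF int]) (simp add: f0)
  finally have U: "emeasure (dist_of f) UNIV = 1" using one by simp
  have sp: "space (dist_of f) = UNIV" unfolding dist_of_def by simp
  show rd: "real_distribution (dist_of f)"
    unfolding real_distribution_def real_distribution_axioms_def
    by (auto simp: prob_space_def prob_space_axioms_def sets sp U intro!: finite_measureI)
  show "cdf_of f = cdf (dist_of f)"
    by (rule ext) (simp add: cdf_of_def cdf_def)
  have "emeasure (dist_of f) {..0} = (\<integral>\<^sup>+ x. ennreal (f x) * indicator {..0} x \<partial>lborel)"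
    unfolding dist_of_def by (rule emeasure_density) auto
  also have "\<dots> = (\<integral>\<^sup>+ (x::real). 0 \<partial>lborel)"
  proof -
    have "AE x in lborel. ennreal (f x) * indicator {..0} x = 0"
      using AE_lborel_singleton[of "0::real"]
      by eventually_elim (auto simp: fneg indicator_def)
    then show ?thesis by (rule nn_integral_cong_AE)
  qed
  finally show "cdf_of f 0 = 0" by (simp add: cdf_of_def measure_def)
qed



lemma quantile_pos_fin:
  fixes f :: "real \<Rightarrow> real"
  assumes rd: "real_distribution (dist_of f)" and c0: "cdf_of f 0 = 0"
    and cc: "cdf_of f = cdf (dist_of f)"
    and p: "0 < p" "p < 1"
  shows "0 < quantile f p" "quantile f p < \<infinity>"
proof -
  interpret real_distribution "dist_of f" by (rule rd)
  have "\<forall>\<^sub>F x in at_top. cdf (dist_of f) x > p"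
    using cdf_lim_at_top_prob p(2) by (rule order_tendstoD)
  moreover have "\<forall>\<^sub>F x in at_top. (x::real) \<ge> 0" by (rule eventually_ge_at_top)
  ultimately have "\<forall>\<^sub>F x in at_top. cdf (dist_of f) x > p \<and> x \<ge> 0" by eventually_elim auto
  then obtain N where N: "\<And>x. x \<ge> N \<Longrightarrow> cdf (dist_of f) x > p \<and> x \<ge> 0"
    unfolding eventually_at_top_linorder by blast
  have x: "cdf (dist_of f) N > p" "N \<ge> 0" using N[of N] by auto
  have "quantile f p \<le> ennreal N"
    unfolding quantile_def
  proof (rule Inf_lower)
    have "p \<le> cdf_of f N" using x cc by simp
    then show "ennreal N \<in> {ennreal x |x. 0 \<le> x \<and> p \<le> cdf_of f x}" using x by blast
  qed
  also have "ennreal N < \<infinity>" by simp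
  finally show "quantile f p < \<infinity>" .
  have "continuous (at_right 0) (cdf (dist_of f))" by (rule cdf_is_right_cont)
  then have "(cdf (dist_of f) \<longlongrightarrow> 0) (at_right 0)"
    using c0 cc by (simp add: continuous_within)
  then have "\<forall>\<^sub>F y in at_right 0. cdf (dist_of f) y < p"
    using p(1) by (rule order_tendstoD)
  then obtain d where d: "d > 0" "\<And>y. 0 < y \<Longrightarrow> y < d \<Longrightarrow> cdf (dist_of f) y < p"
    unfolding eventually_at_right_field by auto
  have "ennreal d \<le> quantile f p"
    unfolding quantile_def
  proof (rule Inf_greatest, clarify)
    fix y assume y: "0 \<le> y" "p \<le> cdf_of f y"
    have "y \<ge> d"
    proof (rule ccontr)
      assume "\<not> y \<ge> d"
      show False
      proof (cases "y = 0")
        case True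
        then show False using y c0 p by simp
      next
        case False
        then have "cdf (dist_of f) y < p" using d(2)[of y] y \<open>\<not> y \<ge> d\<close> by simp
        then show False using y cc by simp
      qed
    qed
    then show "ennreal d \<le> ennreal y" by (rule ennreal_leI)
  qed
  moreover have "0 < ennreal d" using d(1) by simp
  ultimately show "0 < quantile f p" by (rule order.strict_trans2[rotated])
qed


theorem proposition1:
  fixes n :: nat and \<rho> :: real and f :: "real \<Rightarrow> real"
  assumes "n \<ge> 2"
    and "\<rho> > 0"
    and "\<And>x. f x \<ge> 0"
    and "\<And>x. x < 0 \<Longrightarrow> f x = 0"
    and "\<And>x y. 0 < x \<Longrightarrow> x \<le> y \<Longrightarrow> f y \<le> f x"
    and "integrable lborel f"
    and "(\<integral>x. f x \<partial>lborel) = 1"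
    and "integrable lborel (\<lambda>x. x * f x)"
    and "(\<integral>x. x * f x \<partial>lborel) > 0"
  shows "best_zero_outage_capacity n \<rho> f > 0"
proof -
  note n2 = assms(1) and f0 = assms(3) and fneg = assms(4) and int = assms(6)
  have rd: "real_distribution (dist_of f)" and c0: "cdf_of f 0 = 0"
    and cc: "cdf_of f = cdf (dist_of f)"
    using setup_dist[OF assms(3,4,6,7)] by auto
  interpret real_distribution "dist_of f" by (rule rd)
  have fm[measurable]: "f \<in> borel_measurable borel"
    using borel_measurable_integrable[OF int] by simp
  define S where "S = {c \<in> {0..(1 - 0) / real n}.
      ennreal ((1 - 0) / real n - c) * Hfun n f 0 c
        \<le> (\<integral>\<^sup>+ t \<in> {c..(1 - 0) / real n}. Hfun n f 0 t \<partial>lborel)}"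
  have cnS: "cn n f 0 = Inf S" unfolding S_def cn_def by simp
  have npos: "real n > 0" using n2 by simp
  have inS: "1 / real n \<in> S" unfolding S_def using npos by simp
  have bdd: "bdd_below S" unfolding S_def by (rule bdd_belowI[of _ 0]) auto
  have cn_le: "cn n f 0 \<le> 1 / real n" unfolding cnS by (rule cInf_lower[OF inS bdd])
  have cn_ge: "cn n f 0 \<ge> 0" unfolding cnS
    by (rule cInf_greatest) (use inS in auto, auto simp: S_def)
  have phipos: "phi n f 0 > 0"
  proof (cases "cn n f 0 > 0")
    case True
    define c where "c = cn n f 0"
    have cpos: "c > 0" and cle: "c \<le> 1 / real n" using True cn_le c_def by auto
    have "real (n - 1) * c \<le> real (n - 1) * (1 / real n)"
      using cle by (intro mult_left_mono) auto
    also have "\<dots> < 1" using npos n2 by (simp add: of_nat_diff field_simps)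
    finally have a1: "real (n - 1) * c < 1" .
    have a0: "real (n - 1) * c > 0" using cpos n2 by simp
    have "1 / real n \<le> 1 / 2" using n2 by (simp add: field_simps)
    then have b1: "0 < 1 - c" "1 - c < 1" using cle cpos by auto
    have q1: "quantile f (0 + real (n - 1) * c) < \<infinity>"
      using quantile_pos_fin(2)[OF rd c0 cc a0 a1] by simp
    have q2: "0 < quantile f (1 - c)" "quantile f (1 - c) < \<infinity>"
      using quantile_pos_fin[OF rd c0 cc b1] by auto
    have H: "Hfun n f 0 c = of_nat (n - 1) * quantile f (0 + real (n - 1) * c) + quantile f (1 - c)"
      unfolding Hfun_def ..
    have Hfin: "Hfun n f 0 c < \<infinity>" unfolding H using q1 q2
      by (simp add: ennreal_mult_less_top of_nat_less_top)
    have Hpos: "0 < Hfun n f 0 c" unfolding H using q2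
      by (metis add_eq_0_iff_both_eq_0 not_gr_zero)
    have "phi n f 0 = enn2real (Hfun n f 0 c)" using True unfolding phi_def c_def by simp
    then show ?thesis using Hfin Hpos by (simp add: enn2real_positive_iff)
  next
    case False
    have q0: "quantile f 0 = 0"
    proof -
      have "quantile f 0 \<le> ennreal 0" unfolding quantile_def
      proof (rule Inf_lower)
        show "ennreal 0 \<in> {ennreal x |x. 0 \<le> x \<and> 0 \<le> cdf_of f x}" using c0 by force
      qed
      then show ?thesis by simp
    qed
    have m1: "measure (dist_of f) {0<..} = 1"
    proof -
      have "{0<..} = space (dist_of f) - {..0::real}" by auto
      then have "measure (dist_of f) {0<..} = 1 - measure (dist_of f) {..0}"
        using prob_compl[of "{..0}"] by simp
      also have "measure (dist_of f) {..0} = 0" using c0 by (simp add: cdf_of_def)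
      finally show ?thesis by simp
    qed
    have I: "(\<integral>x \<in> {0<..}. x \<partial>dist_of f) = (\<integral>x. x * f x \<partial>lborel)"
    proof -
      have "(\<integral>x \<in> {0<..}. x \<partial>dist_of f) = (\<integral>x. indicator {0<..} x *\<^sub>R x \<partial>dist_of f)"
        by (simp add: set_lebesgue_integral_def)
      also have "\<dots> = (\<integral>x. f x *\<^sub>R (indicator {0<..} x *\<^sub>R x) \<partial>lborel)"
        unfolding dist_of_def by (rule integral_density) (auto simp: f0)
      also have "\<dots> = (\<integral>x. x * f x \<partial>lborel)"
      proof (rule Bochner_Integration.integral_cong)
        fix x :: real
        show "f x *\<^sub>R (indicator {0<..} x *\<^sub>R x) = x * f x"
          using fneg[of x] by (cases "x > 0"; cases "x = 0") (auto simp: indicator_def)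
      qed simp
      finally show ?thesis .
    qed
    have "phi n f 0 = real n * ((\<integral>x. x * f x \<partial>lborel) / 1)"
      using False unfolding phi_def Let_def q0 I[symmetric] m1[symmetric] by simp
    then show ?thesis using npos assms(9) by simp
  qed
  have "1 < 1 + \<rho> * phi n f 0" using assms(2) phipos by simp
  then show ?thesis unfolding best_zero_outage_capacity_def by simp
qed

end
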